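(* Let $k$ be a field of characteristic $p>0$ and $A$ a $k$-vector space of finite dimension $n\ge1$. For every $r\ge pn-1$, $S_{\le r}A=SA$.
   Context: $SA=\bigoplus_{m\ge0}S^mA$ is the symmetric algebra of $A$ ($S^0A=k$, $S^mA$ the $m$-th symmetric power, with pure symmetric tensors $a_1\otimes_s\dots\otimes_s a_m$). The linear map $\partial\colon SA\to SA\otimes A$ is given by $\partial(\lambda)=0$ for $\lambda\in S^0A$ and $\partial(a_1\otimes_s\dots\otimes_s a_m)=\sum_{i=1}^m(a_1\otimes_s\dots\otimes_s a_{i-1}\otimes_s a_{i+1}\otimes_s\dots\otimes_s a_m)\otimes a_i$. Iterates: $\partial^0=1_{SA}$ and $\partial^{r+1}:=\partial;(\partial^r\otimes 1_A)\colon SA\to SA\otimes A^{\otimes(r+1)}$. Define $S_{\le r}A:=\ker(\partial^{r+1})\subseteq SA$. *)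

theory Defs
  imports Main "HOL-Library.Multiset" "HOL-Library.Cardinality"
begin

text \<open>A is the k-vector space with finite basis indexed by the type 'b (so dim A = CARD('b)).
  A basis of S^m A is given by the symmetric tensors of basis vectors, i.e. multisets of
  size m over 'b; a basis of A^{tensor r} is given by lists of length r over 'b.
  An element of SA is a finitely supported function 'b multiset => 'k; an element of
  SA tensor A^{tensor r} is a finitely supported function on pairs (multiset, list).\<close>

type_synonym ('b, 'k) tens = "'b multiset \<times> 'b list \<Rightarrow> 'k"

definition fin_supp :: "('a \<Rightarrow> 'k::zero) \<Rightarrow> bool" where
  "fin_supp f \<longleftrightarrow> finite {x. f x \<noteq> 0}"

text \<open>The map partial tensor 1 on SA tensor A^{tensor r}, extended linearly from basis elements:
  on a basis element (M, w) with M = a_1 ... a_m it gives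
  sum over positions i of (M minus a_i, a_i # w), so the coefficient of (N, v) is the number
  of positions i (counted with multiplicity in M) whose term equals (N, v).\<close>

definition del1 :: "('b, 'k::field) tens \<Rightarrow> ('b, 'k) tens" where
  "del1 f = (\<lambda>(N, v). \<Sum>x\<in>{x. f x \<noteq> 0}.
      f x * of_nat (size (filter_mset (\<lambda>i. (fst x - {#i#}, i # snd x) = (N, v)) (fst x))))"

text \<open>SA identified with SA tensor A^{tensor 0}.\<close>

definition emb0 :: "('b multiset \<Rightarrow> 'k::zero) \<Rightarrow> ('b, 'k) tens" where
  "emb0 f = (\<lambda>(M, w). if w = [] then f M else 0)"

text \<open>partial^r : SA -> SA tensor A^{tensor r}; partial^0 = id and
  partial^{r+1} = partial ; (partial^r tensor 1), which is the r+1 fold iterate of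
  (partial tensor 1) starting from SA.\<close>

definition delpow :: "nat \<Rightarrow> ('b multiset \<Rightarrow> 'k::field) \<Rightarrow> ('b, 'k) tens" where
  "delpow r f = (del1 ^^ r) (emb0 f)"

definition S_le :: "nat \<Rightarrow> ('b multiset \<Rightarrow> 'k::field) set" where
  "S_le r = {f. fin_supp f \<and> delpow (Suc r) f = (\<lambda>_. 0)}"

definition SA :: "('b multiset \<Rightarrow> 'k::zero) set" where
  "SA = {f. fin_supp f}"

end

theory Submission
  imports Defs
begin

lemma del1_nil:
  "del1 g (N, []) = 0"
  unfolding del1_def by (simp add: filter_mset_False)

lemma del1_cons:
  assumes "fin_supp g"
  shows "del1 g (N, j # u) = g (add_mset j N, u) * of_nat (count N j + 1)"
proof -
  let ?S = "{x. g x \<noteq> 0}"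
  have fin: "finite ?S" using assms by (simp add: fin_supp_def)
  have trm: "g x * of_nat (size (filter_mset (\<lambda>i. (fst x - {#i#}, i # snd x) = (N, j # u)) (fst x)))
      = (if x = (add_mset j N, u) then g x * of_nat (count N j + 1) else 0)" for x
  proof (cases x)
    case (Pair M w)
    show ?thesis
    proof (cases "x = (add_mset j N, u)")
      case True
      then have M: "M = add_mset j N" and w: "w = u" using Pair by auto
      have "filter_mset (\<lambda>i. (M - {#i#}, i # w) = (N, j # u)) M = filter_mset (\<lambda>i. i = j) M"
        by (rule filter_mset_cong0) (auto simp: M w)
      then show ?thesis using True Pair M by (simp add: filter_eq_replicate_mset)
    next
      case False
      have F: "filter_mset (\<lambda>i. (M - {#i#}, i # w) = (N, j # u)) M = {#}"
      proof (subst filter_mset_eq_mempty_iff, intro allI impI notI)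
        fix i assume i: "i \<in># M" and h: "(M - {#i#}, i # w) = (N, j # u)"
        then have "M = add_mset j N" "w = u" by (auto simp: insert_DiffM)
        then show False using False Pair by simp
      qed
      have "x \<noteq> (add_mset j N, u)" using False .
      then show ?thesis unfolding Pair fst_conv snd_conv F by auto
    qed
  qed
  have "del1 g (N, j # u) = (\<Sum>x\<in>?S. (if x = (add_mset j N, u) then g x * of_nat (count N j + 1) else 0))"
    unfolding del1_def using trm by simp
  also have "\<dots> = g (add_mset j N, u) * of_nat (count N j + 1)"
    using fin by (simp add: sum.delta')
  finally show ?thesis .
qed

lemma del1_fin:
  assumes "fin_supp g"
  shows "fin_supp (del1 g)"
proof -
  let ?S = "{x. g x \<noteq> 0}"
  have fin: "finite ?S" using assms by (simp add: fin_supp_def)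
  have "{x. del1 g x \<noteq> 0} \<subseteq> (\<Union>x\<in>?S. (\<lambda>i. (fst x - {#i#}, i # snd x)) ` set_mset (fst x))"
  proof
    fix y assume y: "y \<in> {x. del1 g x \<noteq> 0}"
    obtain N v where yv: "y = (N, v)" by fastforce
    show "y \<in> (\<Union>x\<in>?S. (\<lambda>i. (fst x - {#i#}, i # snd x)) ` set_mset (fst x))"
    proof (cases v)
      case Nil then show ?thesis using y yv by (simp add: del1_nil)
    next
      case (Cons j u)
      then have "g (add_mset j N, u) \<noteq> 0" using y yv del1_cons[OF assms] by auto
      moreover have "(N, j # u) \<in> (\<lambda>i. (fst (add_mset j N, u) - {#i#}, i # snd (add_mset j N, u))) ` set_mset (fst (add_mset j N, u))"
        by (rule image_eqI[of _ _ j]) auto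
      ultimately show ?thesis using yv Cons by blast
    qed
  qed
  moreover have "finite (\<Union>x\<in>?S. (\<lambda>i. (fst x - {#i#}, i # snd x)) ` set_mset (fst x))"
    using fin by auto
  ultimately show ?thesis unfolding fin_supp_def by (rule finite_subset)
qed

fun cc :: "'b multiset \<Rightarrow> 'b list \<Rightarrow> nat" where
  "cc N [] = 1"
| "cc N (i # w) = cc (add_mset i N) w * (count N i + 1)"

lemma emb0_fin: "fin_supp f \<Longrightarrow> fin_supp (emb0 f)"
proof -
  assume "fin_supp f"
  then have "finite ((\<lambda>M. (M, [])) ` {x. f x \<noteq> 0})" by (simp add: fin_supp_def)
  moreover have "{x. emb0 f x \<noteq> 0} \<subseteq> (\<lambda>M. (M, [])) ` {x. f x \<noteq> 0}"
    by (auto simp: emb0_def split: if_splits)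
  ultimately show ?thesis unfolding fin_supp_def by (rule finite_subset[rotated])
qed

lemma delpow_fin: "fin_supp f \<Longrightarrow> fin_supp ((del1 ^^ r) (emb0 f))"
  by (induction r) (auto simp: emb0_fin del1_fin)

lemma delpow_closed:
  assumes "fin_supp f"
  shows "(del1 ^^ r) (emb0 f) (N, v) = (if length v = r then f (N + mset v) * of_nat (cc N v) else 0)"
proof (induction r arbitrary: N v)
  case 0
  then show ?case by (simp add: emb0_def)
next
  case (Suc r)
  show ?case
  proof (cases v)
    case Nil then show ?thesis by (simp add: del1_nil)
  next
    case (Cons j u)
    then show ?thesis
      using del1_cons[OF delpow_fin[OF assms, of r]] Suc.IH
      by (simp add: algebra_simps)
  qed
qed

lemma prod_shift1:
  "(\<Prod>j\<in>{1..Suc k}. (a + j)) = (Suc a) * (\<Prod>j\<in>{1..k}. (a + Suc j))"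
proof (induction k)
  case 0 then show ?case by simp
next
  case (Suc k)
  have e1: "(\<Prod>j\<in>{1..Suc (Suc k)}. (a + j)) = (\<Prod>j\<in>{1..Suc k}. (a + j)) * (a + Suc (Suc k))"
    by (simp add: prod.cl_ivl_Suc mult.commute)
  have e2: "(\<Prod>j\<in>{1..Suc k}. (a + Suc j)) = (\<Prod>j\<in>{1..k}. (a + Suc j)) * (a + Suc (Suc k))"
    by (simp add: prod.cl_ivl_Suc mult.commute)
  show ?case unfolding e1 e2 Suc.IH by (simp only: mult.assoc)
qed

lemma cc_factor:
  "\<exists>d. cc N v = d * (\<Prod>j\<in>{1..count (mset v) b}. (count N b + j))"
proof (induction v arbitrary: N)
  case Nil then show ?case by simp
next
  case (Cons i w)
  obtain d where d: "cc (add_mset i N) w = d * (\<Prod>j\<in>{1..count (mset w) b}. (count (add_mset i N) b + j))"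
    using Cons.IH by blast
  show ?case
  proof (cases "i = b")
    case True
    have "(\<Prod>j\<in>{1..Suc (count (mset w) b)}. (count N b + j))
        = (count N b + 1) * (\<Prod>j\<in>{1..count (mset w) b}. (count N b + Suc j))"
      using prod_shift1[of "count N b"] by simp
    then show ?thesis using True d
      by (intro exI[of _ d]) (simp add: algebra_simps)
  next
    case False
    then show ?thesis using d
      by (intro exI[of _ "d * (count N i + 1)"]) (simp add: algebra_simps)
  qed
qed

lemma consec_dvd:
  fixes p :: nat
  assumes "p > 0" "k \<ge> p"
  shows "p dvd (\<Prod>j\<in>{1..k}. (a + j))"
proof -
  define j where "j = p - a mod p"
  have "a mod p < p" using assms by simp
  then have j: "j \<in> {1..k}" using assms unfolding j_def atLeastAtMost_iff by linarith
  have h: "p * (a div p) + a mod p = a" by (rule mult_div_mod_eq)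
  have "a + j = p * (a div p + 1)"
    using h \<open>a mod p < p\<close> unfolding j_def distrib_left mult_1_right by linarith
  then have "p dvd a + j" by simp
  then show ?thesis using j by (meson dvd_prodI dvd_trans finite_atLeastAtMost)
qed

lemma pigeon:
  fixes v :: "'b::finite list"
  assumes "length v \<ge> p * CARD('b)"
  shows "\<exists>b. count (mset v) b \<ge> p"
proof (rule ccontr)
  assume "\<not> ?thesis"
  then have lt: "count (mset v) b < p" for b by (meson not_le)
  then have p0: "p > 0" by (metis gr_zeroI not_less0)
  have "length v = size (mset v)" by simp
  also have "\<dots> = (\<Sum>b\<in>UNIV. count (mset v) b)"
    by (simp add: size_multiset_overloaded_eq, rule sum.mono_neutral_left) auto
  also have "\<dots> \<le> (\<Sum>b\<in>(UNIV::'b set). p - 1)"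
    using lt by (intro sum_mono) (simp add: less_Suc_eq_le Suc_leI le_diff_conv2 p0)
  also have "\<dots> = CARD('b) * (p - 1)" by simp
  also have "\<dots> < p * CARD('b)" using p0 by (simp add: algebra_simps diff_mult_distrib2)
  finally show False using assms by simp
qed

theorem proposition7p6:
  fixes p n r :: nat
  assumes "CHAR('k) = p" and "p > 0"
    and "CARD('b) = n" and "n \<ge> 1"
    and "r \<ge> p * n - 1"
  shows "(S_le r :: ('b::finite multiset \<Rightarrow> 'k::field) set) = SA"
proof
  show "(S_le r :: ('b::finite multiset \<Rightarrow> 'k::field) set) \<subseteq> SA"
    by (auto simp: S_le_def SA_def)
next
  show "SA \<subseteq> (S_le r :: ('b::finite multiset \<Rightarrow> 'k::field) set)"
  proof
    fix f :: "'b multiset \<Rightarrow> 'k" assume "f \<in> SA"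
    then have ff: "fin_supp f" by (simp add: SA_def)
    have "delpow (Suc r) f x = 0" for x
    proof -
      obtain N v where x: "x = (N, v)" by fastforce
      show ?thesis
      proof (cases "length v = Suc r")
        case False then show ?thesis using x delpow_closed[OF ff, of "Suc r" N v]
          by (simp add: delpow_def del: funpow.simps)
      next
        case True
        have "p * n \<ge> 1" using assms by simp
        then have "length v \<ge> p * CARD('b)" using True assms by simp
        then obtain b where b: "count (mset v) b \<ge> p" using pigeon by blast
        obtain d where d: "cc N v = d * (\<Prod>j\<in>{1..count (mset v) b}. (count N b + j))"
          using cc_factor[of N v b] by blast
        have "p dvd cc N v" using d consec_dvd[OF assms(2) b] by simp
        then obtain q where "cc N v = p * q" by blast
        moreover have "(of_nat p :: 'k) = 0" using of_nat_CHAR[where 'a='k] assms(1) by metis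
        ultimately have "(of_nat (cc N v) :: 'k) = 0" by simp
        then show ?thesis using x delpow_closed[OF ff, of "Suc r" N v] True
          by (simp add: delpow_def del: funpow.simps)
      qed
    qed
    then show "f \<in> S_le r" using ff by (auto simp: S_le_def)
  qed
qed

end
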